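(* Let $S_0=\{x\in\mathbb{C}:0<{\rm Im}(x)<\pi\}$. Then for all $x,y\in S_0$: (1) $j^*_{S_0}(x,y)\le p_{S_0}(x,y)\le\sqrt2\,j^*_{S_0}(x,y)$; (2) $j^*_{S_0}(x,y)\le s_{S_0}(x,y)\le\sqrt2\,j^*_{S_0}(x,y)$; (3) $p_{S_0}(x,y)/\sqrt2\le s_{S_0}(x,y)\le p_{S_0}(x,y)$. Furthermore, in each case the constants are sharp.
   Context: For a domain $G\subsetneq\mathbb{C}$, $d_G(x)=\inf\{|x-z|:z\in\partial G\}$, $s_G(x,y)=\frac{|x-y|}{\inf_{z\in\partial G}(|x-z|+|z-y|)}$, $j^*_G(x,y)=\frac{|x-y|}{|x-y|+2\min\{d_G(x),d_G(y)\}}$, $p_G(x,y)=\frac{|x-y|}{\sqrt{|x-y|^2+4d_G(x)d_G(y)}}$. *)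

theory Defs
  imports "HOL-Analysis.Analysis"
begin

definition dG :: "complex set \<Rightarrow> complex \<Rightarrow> real" where
  "dG G x = infdist x (frontier G)"

definition sG :: "complex set \<Rightarrow> complex \<Rightarrow> complex \<Rightarrow> real" where
  "sG G x y = cmod (x - y) / (INF z\<in>frontier G. cmod (x - z) + cmod (z - y))"

definition jstarG :: "complex set \<Rightarrow> complex \<Rightarrow> complex \<Rightarrow> real" where
  "jstarG G x y = cmod (x - y) / (cmod (x - y) + 2 * min (dG G x) (dG G y))"

definition pG :: "complex set \<Rightarrow> complex \<Rightarrow> complex \<Rightarrow> real" where
  "pG G x y = cmod (x - y) / sqrt ((cmod (x - y))\<^sup>2 + 4 * dG G x * dG G y)"

definition S0 :: "complex set" where
  "S0 = {x. 0 < Im x \<and> Im x < pi}"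

end

theory Submission
  imports Defs
begin


lemma alg:
  fixes t dx dy I :: real
  assumes t0: "t \<ge> 0" and dx: "dx > 0" and dy: "dy > 0" and l1: "dy \<le> dx + t" and l2: "dx \<le> dy + t"
    and Iu: "I \<le> t + 2 * min dx dy" and Il: "t^2 + 4*dx*dy \<le> I^2" and I0: "I \<ge> 0"
  shows "t/(t + 2*min dx dy) \<le> t / sqrt (t^2 + 4*dx*dy) \<and>
         t / sqrt (t^2 + 4*dx*dy) \<le> sqrt 2 * (t/(t + 2*min dx dy)) \<and>
         t/(t + 2*min dx dy) \<le> t / I \<and> t / I \<le> sqrt 2 * (t/(t + 2*min dx dy)) \<and>
         (t / sqrt (t^2 + 4*dx*dy)) / sqrt 2 \<le> t / I \<and> t / I \<le> t / sqrt (t^2 + 4*dx*dy)"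
proof (cases "t = 0")
  case True then show ?thesis by simp
next
  case False
  hence tp: "t > 0" using t0 by simp
  define m where "m = min dx dy"
  define D where "D = t + 2*m"
  define Q where "Q = sqrt (t^2 + 4*dx*dy)"
  have mp: "m > 0" using dx dy by (simp add: m_def)
  have Dp: "D > 0" using tp mp by (simp add: D_def)
  have Qp: "Q > 0" using tp dx dy by (simp add: Q_def add_pos_pos)
  have QI: "Q \<le> I" unfolding Q_def using Il I0 by (metis real_le_lsqrt)
  have "dx*dy \<le> t*m + m^2"
  proof (cases "dx \<le> dy")
    case True
    hence "dx*dy \<le> dx*(dx+t)" using l1 dx by (intro mult_left_mono) auto
    then show ?thesis using True by (simp add: m_def power2_eq_square algebra_simps)
  next
    case False
    hence "dx*dy \<le> (dy+t)*dy" using l2 dy by (intro mult_right_mono) auto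
    then show ?thesis using False by (simp add: m_def power2_eq_square algebra_simps)
  qed
  hence "t^2 + 4*dx*dy \<le> D^2" by (simp add: D_def power2_eq_square algebra_simps)
  hence QD: "Q \<le> D" unfolding Q_def using Dp by (metis real_le_lsqrt less_imp_le)
  have "m*m \<le> dx*dy" using dx dy unfolding m_def by (simp add: mult_mono min_def)
  moreover have "4*t*m \<le> t^2 + 4*m^2" using sum_squares_ge_zero[of "t - 2*m" 0]
    by (simp add: power2_eq_square algebra_simps)
  ultimately have "D^2 \<le> 2 * (t^2 + 4*dx*dy)" by (simp add: D_def power2_eq_square algebra_simps)
  hence "sqrt (D^2) \<le> sqrt (2 * (t^2 + 4*dx*dy))" by (rule real_sqrt_le_mono)
  hence DQ: "D \<le> sqrt 2 * Q" using Dp unfolding Q_def real_sqrt_mult[symmetric] by simp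
  have a1: "t/D \<le> t/Q" using QD Qp tp by (intro divide_left_mono) auto
  have a2: "t/Q \<le> sqrt 2 * (t/D)" using DQ Qp Dp tp by (simp add: field_simps)
  have a3: "t/D \<le> t/I" using Iu QI Qp tp by (intro divide_left_mono) (auto simp: D_def m_def)
  have a4: "t/I \<le> t/Q" using QI Qp tp by (intro divide_left_mono) auto
  have "(t/Q) / sqrt 2 \<le> (sqrt 2 * (t/D)) / sqrt 2" using a2 by (rule divide_right_mono) simp
  hence a5: "(t/Q) / sqrt 2 \<le> t/I" using a3 by simp
  show ?thesis using a1 a2 a3 a4 a5 unfolding D_def Q_def m_def by simp
qed



lemma S0_open: "open S0"
  unfolding S0_def by (simp add: open_Collect_conj open_halfspace_Im_gt open_halfspace_Im_lt)

lemma fr1: assumes "z \<in> frontier S0" shows "Im z = 0 \<or> Im z = pi"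
proof -
  have "closure S0 \<subseteq> {z. 0 \<le> Im z} \<inter> {z. Im z \<le> pi}"
    by (rule closure_minimal) (auto simp: S0_def closed_halfspace_Im_ge closed_halfspace_Im_le closed_Int)
  moreover have "frontier S0 = closure S0 - S0" using S0_open by (simp add: frontier_def interior_open)
  ultimately show ?thesis using assms by (auto simp: S0_def)
qed

lemma fr2: assumes "Im z = 0 \<or> Im z = pi" shows "z \<in> frontier S0"
  unfolding frontier_straddle
proof (intro allI impI conjI)
  fix e :: real assume e: "e > 0"
  define h where "h = min (e/2) (pi/2)"
  have h: "h > 0" "h < e" "h < pi" using e pi_gt3 by (auto simp: h_def)
  show "\<exists>x. x \<notin> S0 \<and> dist z x < e" using assms e by (intro exI[of _ z]) (auto simp: S0_def)
  show "\<exists>x\<in>S0. dist z x < e"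
  proof (cases "Im z = 0")
    case True
    show ?thesis
      by (rule bexI[of _ "z + \<i> * of_real h"]) (use h True in \<open>auto simp: S0_def dist_norm norm_mult\<close>)
  next
    case False
    hence "Im z = pi" using assms by simp
    then show ?thesis
      by (intro bexI[of _ "z - \<i> * of_real h"]) (use h in \<open>auto simp: S0_def dist_norm norm_mult\<close>)
  qed
qed

lemma fr_ne: "frontier S0 \<noteq> {}" using fr2[of 0] by auto

lemma dG_eq: assumes "x \<in> S0" shows "dG S0 x = min (Im x) (pi - Im x)"
proof (rule antisym)
  have a: "of_real (Re x) \<in> frontier S0" by (intro fr2) simp
  have b: "Complex (Re x) pi \<in> frontier S0" by (intro fr2) simp
  have "dist x (of_real (Re x)) = Im x" using assms
    by (simp add: dist_norm cmod_def S0_def)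
  moreover have "dist x (Complex (Re x) pi) = pi - Im x" using assms
    by (simp add: dist_norm cmod_def S0_def power2_commute)
  ultimately show "dG S0 x \<le> min (Im x) (pi - Im x)" unfolding dG_def
    using infdist_le[OF a, of x] infdist_le[OF b, of x] by simp
next
  show "min (Im x) (pi - Im x) \<le> dG S0 x"
    unfolding dG_def infdist_notempty[OF fr_ne]
  proof (rule cINF_greatest[OF fr_ne])
    fix z assume "z \<in> frontier S0"
    hence z: "Im z = 0 \<or> Im z = pi" by (rule fr1)
    have "\<bar>Im (x - z)\<bar> \<le> dist x z" unfolding dist_norm by (rule abs_Im_le_cmod)
    then show "min (Im x) (pi - Im x) \<le> dist x z" using z by auto
  qed
qed

lemma I_lower:
  assumes "z \<in> frontier S0"
  shows "min (cmod (x - cnj y)) (cmod (x - (cnj y + 2 * pi * \<i>))) \<le> cmod (x - z) + cmod (z - y)"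
proof -
  from fr1[OF assms] show ?thesis
  proof
    assume "Im z = 0"
    hence "cnj z = z" by (simp add: complex_eq_iff)
    hence "cmod (z - y) = cmod (z - cnj y)" by (metis complex_cnj_diff complex_mod_cnj)
    moreover have "cmod (x - cnj y) \<le> cmod (x - z) + cmod (z - cnj y)" using norm_triangle_ineq[of "x - z" "z - _"] by simp
    ultimately show ?thesis by simp
  next
    assume "Im z = pi"
    hence "cnj z = z - 2 * pi * \<i>" by (simp add: complex_eq_iff)
    hence "cmod (z - y) = cmod (z - (cnj y + 2 * pi * \<i>))"
      by (metis complex_cnj_diff complex_mod_cnj diff_diff_eq diff_right_commute add.commute)
    moreover have "cmod (x - (cnj y + 2 * pi * \<i>)) \<le> cmod (x - z) + cmod (z - (cnj y + 2 * pi * \<i>))" using norm_triangle_ineq[of "x - z" "z - _"] by simp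
    ultimately show ?thesis by simp
  qed
qed



lemma near: assumes "w \<in> S0" shows "\<exists>z\<in>frontier S0. cmod (w - z) = dG S0 w"
proof (cases "Im w \<le> pi - Im w")
  case True
  have "cmod (w - of_real (Re w)) = Im w" using assms by (simp add: cmod_def S0_def)
  then show ?thesis using True assms by (intro bexI[of _ "of_real (Re w)"] fr2) (auto simp: dG_eq)
next
  case False
  have "cmod (w - Complex (Re w) pi) = pi - Im w" using assms
    by (simp add: cmod_def S0_def power2_commute)
  then show ?thesis using False assms by (intro bexI[of _ "Complex (Re w) pi"] fr2) (auto simp: dG_eq)
qed

lemma bdd: "bdd_below ((\<lambda>z. cmod (x - z) + cmod (z - y)) ` A)"
  by (rule bdd_belowI[of _ 0]) auto

lemma I_le: "z \<in> frontier S0 \<Longrightarrow> (INF z\<in>frontier S0. cmod (x - z) + cmod (z - y)) \<le> cmod (x - z) + cmod (z - y)"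
  by (rule cINF_lower[OF bdd])

lemma I_ge: "min (cmod (x - cnj y)) (cmod (x - (cnj y + 2 * pi * \<i>))) \<le> (INF z\<in>frontier S0. cmod (x - z) + cmod (z - y))"
  by (rule cINF_greatest[OF fr_ne]) (rule I_lower)

lemma facts:
  assumes x: "x \<in> S0" and y: "y \<in> S0"
  defines "I \<equiv> (INF z\<in>frontier S0. cmod (x - z) + cmod (z - y))"
  shows "dG S0 x > 0" "dG S0 y > 0" "dG S0 y \<le> dG S0 x + cmod (x - y)" "dG S0 x \<le> dG S0 y + cmod (x - y)"
    "I \<le> cmod (x - y) + 2 * min (dG S0 x) (dG S0 y)"
    "(cmod (x - y))^2 + 4 * dG S0 x * dG S0 y \<le> I^2" "I \<ge> 0"
proof -
  have ex: "dG S0 x = min (Im x) (pi - Im x)" and ey: "dG S0 y = min (Im y) (pi - Im y)"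
    using dG_eq x y by auto
  have xx: "0 < Im x" "Im x < pi" and yy: "0 < Im y" "Im y < pi" using x y by (auto simp: S0_def)
  show "dG S0 x > 0" "dG S0 y > 0" using xx yy unfolding ex ey by auto
  show "dG S0 y \<le> dG S0 x + cmod (x - y)" unfolding dG_def
    using infdist_triangle[of y "frontier S0" x] by (simp add: dist_norm norm_minus_commute)
  show "dG S0 x \<le> dG S0 y + cmod (x - y)" unfolding dG_def
    using infdist_triangle[of x "frontier S0" y] by (simp add: dist_norm)
  show "I \<le> cmod (x - y) + 2 * min (dG S0 x) (dG S0 y)"
  proof (cases "dG S0 x \<le> dG S0 y")
    case True
    obtain z where z: "z \<in> frontier S0" "cmod (x - z) = dG S0 x" using near[OF x] by blast
    have "cmod (z - y) \<le> cmod (z - x) + cmod (x - y)" using norm_triangle_ineq[of "z - x" "x - y"] by simp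
    hence "I \<le> cmod (x - z) + (cmod (z - x) + cmod (x - y))" using I_le[OF z(1), of x y] unfolding I_def by linarith
    then show ?thesis using z True by (simp add: norm_minus_commute)
  next
    case False
    obtain z where z: "z \<in> frontier S0" "cmod (y - z) = dG S0 y" using near[OF y] by blast
    have "cmod (x - z) \<le> cmod (x - y) + cmod (y - z)" using norm_triangle_ineq[of "x - y" "y - z"] by simp
    hence "I \<le> (cmod (x - y) + cmod (y - z)) + cmod (z - y)" using I_le[OF z(1), of x y] unfolding I_def by linarith
    then show ?thesis using z False by (simp add: norm_minus_commute)
  qed
  define A where "A = cmod (x - cnj y)"
  define B where "B = cmod (x - (cnj y + 2 * pi * \<i>))"
  have mI: "min A B \<le> I" unfolding A_def B_def I_def by (rule I_ge)
  have A0: "A \<ge> 0" "B \<ge> 0" by (auto simp: A_def B_def)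
  show "I \<ge> 0" using mI A0 by linarith
  define u where "u = Re x - Re y"
  define a where "a = Im x" define b where "b = Im y"
  have t2: "(cmod (x - y))^2 = u^2 + (a - b)^2" by (simp add: cmod_power2 u_def a_def b_def)
  have A2: "A^2 = u^2 + (a + b)^2" by (simp add: A_def cmod_power2 u_def a_def b_def)
  have B2: "B^2 = u^2 + (2*pi - a - b)^2" unfolding B_def cmod_power2
    by (simp add: u_def a_def b_def power2_eq_square algebra_simps)
  have dx: "dG S0 x \<le> a" "dG S0 x \<le> pi - a" "0 \<le> dG S0 x" using xx unfolding ex a_def by auto
  have dy: "dG S0 y \<le> b" "dG S0 y \<le> pi - b" "0 \<le> dG S0 y" using yy unfolding ey b_def by auto
  have p1: "dG S0 x * dG S0 y \<le> a * b" using dx dy by (intro mult_mono) auto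
  have p2: "dG S0 x * dG S0 y \<le> (pi - a) * (pi - b)" using dx dy by (intro mult_mono) auto
  have "(cmod (x - y))^2 + 4 * dG S0 x * dG S0 y \<le> A^2"
    using p1 unfolding t2 A2 by (simp add: power2_eq_square algebra_simps)
  moreover have "(cmod (x - y))^2 + 4 * dG S0 x * dG S0 y \<le> B^2"
    using p2 unfolding t2 B2 by (simp add: power2_eq_square algebra_simps)
  ultimately have "(cmod (x - y))^2 + 4 * dG S0 x * dG S0 y \<le> (min A B)^2" by (simp add: min_def)
  also have "\<dots> \<le> I^2" using mI A0 by (intro power_mono) auto
  finally show "(cmod (x - y))^2 + 4 * dG S0 x * dG S0 y \<le> I^2" .
qed


lemma general:
  assumes x: "x \<in> S0" and y: "y \<in> S0"
  shows "jstarG S0 x y \<le> pG S0 x y \<and> pG S0 x y \<le> sqrt 2 * jstarG S0 x y \<and>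
            jstarG S0 x y \<le> sG S0 x y \<and> sG S0 x y \<le> sqrt 2 * jstarG S0 x y \<and>
            pG S0 x y / sqrt 2 \<le> sG S0 x y \<and> sG S0 x y \<le> pG S0 x y"
  unfolding jstarG_def pG_def sG_def
  by (rule alg[OF norm_ge_zero facts[OF x y]])

lemma ex1:
  defines "x \<equiv> Complex 0 1" and "y \<equiv> Complex 2 1"
  shows "x \<in> S0" "y \<in> S0" "x \<noteq> y" "jstarG S0 x y = 1/2" "pG S0 x y = sqrt 2 / 2" "sG S0 x y = sqrt 2 / 2"
proof -
  show xs: "x \<in> S0" and ys: "y \<in> S0" using pi_gt3 by (auto simp: S0_def x_def y_def)
  show "x \<noteq> y" by (simp add: x_def y_def)
  have dx: "dG S0 x = 1" using dG_eq[OF xs] pi_gt3 by (simp add: x_def)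
  have dy: "dG S0 y = 1" using dG_eq[OF ys] pi_gt3 by (simp add: y_def)
  have t: "cmod (x - y) = 2" by (simp add: x_def y_def cmod_def)
  show "jstarG S0 x y = 1/2" by (simp add: jstarG_def dx dy t)
  have s8: "sqrt 8 = 2 * sqrt 2" using real_sqrt_mult[of 4 2] by simp
  have h2: "2 / (2 * sqrt 2) = sqrt 2 / (2::real)"
  proof -
    have "sqrt 2 * sqrt 2 = (2::real)" by simp
    then show ?thesis by (simp add: field_simps)
  qed
  have "pG S0 x y = 2 / sqrt 8" by (simp add: pG_def dx dy t)
  then show "pG S0 x y = sqrt 2 / 2" using s8 h2 by simp
  define I where "I = (INF z\<in>frontier S0. cmod (x - z) + cmod (z - y))"
  have "I \<le> cmod (x - 1) + cmod (1 - y)" unfolding I_def by (rule I_le) (rule fr2, simp)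
  also have "\<dots> = 2 * sqrt 2" by (simp add: x_def y_def cmod_def)
  finally have Iu: "I \<le> 2 * sqrt 2" .
  have e8: "(2 * sqrt 2)^2 = (8::real)" by (simp add: power_mult_distrib)
  have "(cmod (x - y))^2 + 4 * dG S0 x * dG S0 y \<le> I^2" unfolding I_def by (rule facts(6)[OF xs ys])
  hence "(2 * sqrt 2)^2 \<le> I^2" unfolding dx dy t e8 by simp
  moreover have I0: "0 \<le> I" unfolding I_def by (rule facts(7)[OF xs ys])
  ultimately have "2 * sqrt 2 \<le> I" by (rule power2_le_imp_le)
  hence "I = 2 * sqrt 2" using Iu by simp
  moreover have "sG S0 x y = 2 / I" by (simp add: sG_def t I_def)
  ultimately show "sG S0 x y = sqrt 2 / 2" using h2 by simp
qed

lemma ex2: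
  defines "x \<equiv> Complex 0 (pi/4)" and "y \<equiv> Complex 0 (3*pi/4)"
  shows "x \<in> S0" "y \<in> S0" "x \<noteq> y" "pG S0 x y = sqrt 2 / 2" "sG S0 x y \<le> 1/2"
proof -
  show xs: "x \<in> S0" and ys: "y \<in> S0" using pi_gt_zero by (auto simp: S0_def x_def y_def)
  show "x \<noteq> y" using pi_gt_zero by (simp add: x_def y_def)
  have dx: "dG S0 x = pi/4" using dG_eq[OF xs] pi_gt_zero by (simp add: x_def)
  have dy: "dG S0 y = pi/4" using dG_eq[OF ys] pi_gt_zero by (simp add: y_def)
  have t: "cmod (x - y) = pi/2" using pi_gt_zero by (simp add: x_def y_def cmod_def)
  have "(pi/2)^2 + 4*(pi/4)*(pi/4) = (pi / sqrt 2)^2" by (simp add: power_divide power2_eq_square)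
  hence q: "sqrt ((pi/2)^2 + 4*(pi/4)*(pi/4)) = pi / sqrt 2" using pi_gt_zero by simp
  show "pG S0 x y = sqrt 2 / 2" unfolding pG_def dx dy t q using pi_gt_zero
    by (simp add: field_simps)
  have A: "cmod (x - cnj y) = pi" using pi_gt_zero by (simp add: x_def y_def cmod_def)
  have B: "cmod (x - (cnj y + 2 * pi * \<i>)) = pi" using pi_gt_zero
    by (simp add: x_def y_def cmod_def complex_eq_iff)
  define I where "I = (INF z\<in>frontier S0. cmod (x - z) + cmod (z - y))"
  have Ip: "pi \<le> I" using I_ge[of x y] A B by (simp add: I_def)
  have "sG S0 x y = (pi/2) / I" by (simp add: sG_def t I_def)
  also have "\<dots> \<le> (pi/2) / pi" 
  proof (rule divide_left_mono)
    have "0 < I" using Ip pi_gt_zero by linarith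
    then show "0 < I * pi" using pi_gt_zero by simp
  qed (use Ip pi_gt_zero in auto)
  finally show "sG S0 x y \<le> 1/2" using pi_gt_zero by simp
qed

lemma ex3:
  fixes e :: real
  assumes e: "0 < e" "e \<le> 1"
  defines "x \<equiv> Complex 0 e" and "y \<equiv> Complex 1 e"
  shows "x \<in> S0" "y \<in> S0" "x \<noteq> y" "jstarG S0 x y = 1/(1+2*e)" "pG S0 x y \<le> 1"
proof -
  show xs: "x \<in> S0" and ys: "y \<in> S0" using pi_gt3 e by (auto simp: S0_def x_def y_def)
  show "x \<noteq> y" by (simp add: x_def y_def)
  have dx: "dG S0 x = e" using dG_eq[OF xs] pi_gt3 e by (simp add: x_def)
  have dy: "dG S0 y = e" using dG_eq[OF ys] pi_gt3 e by (simp add: y_def)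
  have t: "cmod (x - y) = 1" by (simp add: x_def y_def cmod_def)
  show "jstarG S0 x y = 1/(1+2*e)" by (simp add: jstarG_def dx dy t)
  have s1: "1 \<le> sqrt (1 + 4*e*e)" using e by simp
  have q0: "0 < 1 + 4*e*e" using e by (simp add: add_pos_pos)
  have "pG S0 x y = 1 / sqrt (1 + 4*e*e)" by (simp add: pG_def dx dy t power2_eq_square mult.assoc)
  also have "1 / sqrt (1 + 4*e*e) \<le> 1 / 1" using s1 q0 by (intro divide_left_mono) auto
  finally show "pG S0 x y \<le> 1" by simp
qed

lemma ex3c:
  fixes c :: real assumes c: "c > 1"
  shows "\<exists>x\<in>S0. \<exists>y\<in>S0. x \<noteq> y \<and> pG S0 x y < c * jstarG S0 x y \<and> sG S0 x y < c * jstarG S0 x y"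
proof -
  define e where "e = min 1 ((c - 1)/4)"
  have e3: "e \<le> (c-1)/4" unfolding e_def by (rule min.cobounded2)
  have e: "0 < e" "e \<le> 1" "e \<le> (c-1)/4" using c e3 by (auto simp: e_def)
  note E = ex3[OF e(1,2)]
  have "1 < c / (1 + 2*e)" using e c by (simp add: field_simps)
  hence lt: "pG S0 (Complex 0 e) (Complex 1 e) < c * jstarG S0 (Complex 0 e) (Complex 1 e)"
    using E(4,5) by simp
  have "sG S0 (Complex 0 e) (Complex 1 e) \<le> pG S0 (Complex 0 e) (Complex 1 e)"
    using general[OF E(1,2)] by simp
  then show ?thesis using lt E(1,2,3)
    by (intro bexI[of _ "Complex 0 e"] bexI[of _ "Complex 1 e"]) auto
qed

theorem theorem3p12:
  shows "(\<forall>x\<in>S0. \<forall>y\<in>S0.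
            jstarG S0 x y \<le> pG S0 x y \<and> pG S0 x y \<le> sqrt 2 * jstarG S0 x y \<and>
            jstarG S0 x y \<le> sG S0 x y \<and> sG S0 x y \<le> sqrt 2 * jstarG S0 x y \<and>
            pG S0 x y / sqrt 2 \<le> sG S0 x y \<and> sG S0 x y \<le> pG S0 x y)
       \<and> (\<forall>c>1. \<exists>x\<in>S0. \<exists>y\<in>S0. x \<noteq> y \<and> pG S0 x y < c * jstarG S0 x y)
       \<and> (\<forall>c<sqrt 2. \<exists>x\<in>S0. \<exists>y\<in>S0. x \<noteq> y \<and> pG S0 x y > c * jstarG S0 x y)
       \<and> (\<forall>c>1. \<exists>x\<in>S0. \<exists>y\<in>S0. x \<noteq> y \<and> sG S0 x y < c * jstarG S0 x y)
       \<and> (\<forall>c<sqrt 2. \<exists>x\<in>S0. \<exists>y\<in>S0. x \<noteq> y \<and> sG S0 x y > c * jstarG S0 x y)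
       \<and> (\<forall>c>1 / sqrt 2. \<exists>x\<in>S0. \<exists>y\<in>S0. x \<noteq> y \<and> sG S0 x y < c * pG S0 x y)
       \<and> (\<forall>c<1. \<exists>x\<in>S0. \<exists>y\<in>S0. x \<noteq> y \<and> sG S0 x y > c * pG S0 x y)"
proof (intro conjI allI impI ballI)
  fix x y assume "x \<in> S0" "y \<in> S0"
  note G = general[OF this]
  show "jstarG S0 x y \<le> pG S0 x y" using G by blast
  show "pG S0 x y \<le> sqrt 2 * jstarG S0 x y" using G by blast
  show "jstarG S0 x y \<le> sG S0 x y" using G by blast
  show "sG S0 x y \<le> sqrt 2 * jstarG S0 x y" using G by blast
  show "pG S0 x y / sqrt 2 \<le> sG S0 x y" using G by blast
  show "sG S0 x y \<le> pG S0 x y" using G by blast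
next
  fix c :: real assume "c > 1"
  from ex3c[OF this] show "\<exists>x\<in>S0. \<exists>y\<in>S0. x \<noteq> y \<and> pG S0 x y < c * jstarG S0 x y" by blast
next
  fix c :: real assume "c > 1"
  from ex3c[OF this] show "\<exists>x\<in>S0. \<exists>y\<in>S0. x \<noteq> y \<and> sG S0 x y < c * jstarG S0 x y" by blast
next
  fix c :: real assume c: "c < sqrt 2"
  have "c * (1/2) < sqrt 2 / 2" using c by simp
  then have "pG S0 (Complex 0 1) (Complex 2 1) > c * jstarG S0 (Complex 0 1) (Complex 2 1)" unfolding ex1(4,5) by simp
  then show "\<exists>x\<in>S0. \<exists>y\<in>S0. x \<noteq> y \<and> pG S0 x y > c * jstarG S0 x y"
    using ex1(1-3) by blast
next
  fix c :: real assume c: "c < sqrt 2"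
  have "c * (1/2) < sqrt 2 / 2" using c by simp
  then have "sG S0 (Complex 0 1) (Complex 2 1) > c * jstarG S0 (Complex 0 1) (Complex 2 1)" unfolding ex1(4,6) by simp
  then show "\<exists>x\<in>S0. \<exists>y\<in>S0. x \<noteq> y \<and> sG S0 x y > c * jstarG S0 x y"
    using ex1(1-3) by blast
next
  fix c :: real assume c: "c < 1"
  have "c * (sqrt 2 / 2) < sqrt 2 / 2" using c by simp
  then have "sG S0 (Complex 0 1) (Complex 2 1) > c * pG S0 (Complex 0 1) (Complex 2 1)" unfolding ex1(5,6) by simp
  then show "\<exists>x\<in>S0. \<exists>y\<in>S0. x \<noteq> y \<and> sG S0 x y > c * pG S0 x y"
    using ex1(1-3) by blast
next
  fix c :: real assume c: "c > 1 / sqrt 2"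
  have "1 < c * sqrt 2" using c by (simp add: field_simps)
  hence "1/2 < c * (sqrt 2 / 2)" by simp
  then have "sG S0 (Complex 0 (pi/4)) (Complex 0 (3*pi/4)) < c * pG S0 (Complex 0 (pi/4)) (Complex 0 (3*pi/4))" using ex2(5) unfolding ex2(4) by linarith
  then show "\<exists>x\<in>S0. \<exists>y\<in>S0. x \<noteq> y \<and> sG S0 x y < c * pG S0 x y"
    using ex2(1-3) by blast
qed

end
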